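(* Let $f_1,f_2$ be the circle rotations by angles $\alpha,\beta\in\mathbb{R}\setminus\mathbb{Q}$ respectively, with $\beta-\alpha\in\mathbb{Q}$. Let $\mathscr{F}=\{f_1,f_2\}$ and $\Phi=\tau\ltimes\mathscr{F}$ on $\Sigma_2\times\mathbb{S}^1$. Then (1) $\mathscr{F}$ is minimal; (2) $\mathbb{S}^1$ is not a strict attractor of $\mathscr{F}$; (3) the strong unstable foliation $\mathcal{F}^{uu}(\Phi)$ is not minimal.
   Context: $\mathbb{S}^1=\mathbb{R}/\mathbb{Z}$. $\mathscr{F}$ is minimal if $\{h(x):h\in\langle\mathscr{F}\rangle^+\}$ is dense for every $x$ ($\langle\mathscr{F}\rangle^+$ = semigroup of finite compositions). $\mathbb{S}^1$ is a strict attractor of $\mathscr{F}$ if $F^n(S)\to\mathbb{S}^1$ in the Hausdorff metric for every nonempty compact $S$, where $F(A)=f_1(A)\cup f_2(A)$. $\Sigma_2=\{1,2\}^{\mathbb{Z}}$ with metric $\nu^m$, $m=\min\{i\geq0:\omega_i\ne\omega'_i\text{ or }\omega_{-i}\ne\omega'_{-i}\}$, $0<\nu<1$; $\tau$ the shift; $\Phi(\omega,x)=(\tau\omega,f_{\omega_0}(x))$. $W^u_{loc}(\omega)=\{\omega':\omega'_i=\omega_i\ \forall i<0\}$, $W^{uu}(\omega,x)=\bigcup_{n\geq0}\Phi^n(W^u_{loc}(\tau^{-n}\omega)\times\{\pi(\Phi^{-n}(\omega,x))\})$ with $\pi$ the projection to $\mathbb{S}^1$; $\mathcal{F}^{uu}(\Phi)$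 is minimal if every such leaf is dense in $\Sigma_2\times\mathbb{S}^1$. *)

theory Defs
  imports "HOL-Analysis.Analysis"
begin

text \<open>The circle S^1 = R/Z is modelled as the unit circle in the complex plane
  (via t mod 1 maps to exp(2 pi i t)); the rotation by angle a becomes
  multiplication by cis (2 pi a).\<close>

definition S1 :: "complex set" where
  "S1 = sphere 0 1"

definition circ_rot :: "real \<Rightarrow> complex \<Rightarrow> complex" where
  "circ_rot a z = cis (2 * pi * a) * z"

inductive_set semigrp :: "('a \<Rightarrow> 'a) set \<Rightarrow> ('a \<Rightarrow> 'a) set" for F where
  gen: "f \<in> F \<Longrightarrow> f \<in> semigrp F"
| comp: "g \<in> semigrp F \<Longrightarrow> f \<in> F \<Longrightarrow> f \<circ> g \<in> semigrp F"

definition ifs_minimal :: "(complex \<Rightarrow> complex) set \<Rightarrow> bool" where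
  "ifs_minimal F \<longleftrightarrow> (\<forall>x\<in>S1. S1 \<subseteq> closure {h x | h. h \<in> semigrp F})"

definition hausdorff_dist :: "'a::metric_space set \<Rightarrow> 'a set \<Rightarrow> real" where
  "hausdorff_dist A B = max (SUP a\<in>A. infdist a B) (SUP b\<in>B. infdist b A)"

definition Fimg :: "('a \<Rightarrow> 'a) set \<Rightarrow> 'a set \<Rightarrow> 'a set" where
  "Fimg F A = (\<Union>f\<in>F. f ` A)"

definition strict_attractor :: "(complex \<Rightarrow> complex) set \<Rightarrow> bool" where
  "strict_attractor F \<longleftrightarrow>
     (\<forall>S. S \<noteq> {} \<and> compact S \<and> S \<subseteq> S1 \<longrightarrow>
        (\<lambda>n. hausdorff_dist ((Fimg F ^^ n) S) S1) \<longlonglongrightarrow> 0)"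

definition Sigma2 :: "(int \<Rightarrow> nat) set" where
  "Sigma2 = {\<omega>. \<forall>i. \<omega> i \<in> {1, 2}}"

definition sigma_dist :: "real \<Rightarrow> (int \<Rightarrow> nat) \<Rightarrow> (int \<Rightarrow> nat) \<Rightarrow> real" where
  "sigma_dist \<nu> \<omega> \<omega>' =
     (if \<omega> = \<omega>' then 0
      else \<nu> ^ (LEAST m::nat. \<omega> (int m) \<noteq> \<omega>' (int m) \<or> \<omega> (- int m) \<noteq> \<omega>' (- int m)))"

definition shift :: "(int \<Rightarrow> nat) \<Rightarrow> (int \<Rightarrow> nat)" where
  "shift \<omega> = (\<lambda>i. \<omega> (i + 1))"

definition shift_inv :: "(int \<Rightarrow> nat) \<Rightarrow> (int \<Rightarrow> nat)" where
  "shift_inv \<omega> = (\<lambda>i. \<omega> (i - 1))"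

definition skew :: "(nat \<Rightarrow> complex \<Rightarrow> complex) \<Rightarrow> (int \<Rightarrow> nat) \<times> complex \<Rightarrow> (int \<Rightarrow> nat) \<times> complex" where
  "skew f p = (shift (fst p), f (fst p 0) (snd p))"

definition skew_inv :: "(nat \<Rightarrow> complex \<Rightarrow> complex) \<Rightarrow> (int \<Rightarrow> nat) \<times> complex \<Rightarrow> (int \<Rightarrow> nat) \<times> complex" where
  "skew_inv f p = (shift_inv (fst p), inv_into S1 (f (fst p (-1))) (snd p))"

definition Wu_loc :: "(int \<Rightarrow> nat) \<Rightarrow> (int \<Rightarrow> nat) set" where
  "Wu_loc \<omega> = {\<omega>' \<in> Sigma2. \<forall>i<0. \<omega>' i = \<omega> i}"

definition Wuu :: "(nat \<Rightarrow> complex \<Rightarrow> complex) \<Rightarrow> (int \<Rightarrow> nat) \<Rightarrow> complex \<Rightarrow> ((int \<Rightarrow> nat) \<times> complex) set" where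
  "Wuu f \<omega> x = (\<Union>n::nat. (skew f ^^ n) `
      (Wu_loc ((shift_inv ^^ n) \<omega>) \<times> {snd ((skew_inv f ^^ n) (\<omega>, x))}))"

definition dense_in_prod :: "real \<Rightarrow> ((int \<Rightarrow> nat) \<times> complex) set \<Rightarrow> bool" where
  "dense_in_prod \<nu> L \<longleftrightarrow>
     (\<forall>\<eta>\<in>Sigma2. \<forall>y\<in>S1. \<forall>e>0. \<exists>(\<eta>', y')\<in>L. sigma_dist \<nu> \<eta> \<eta>' < e \<and> dist y y' < e)"

definition uu_minimal :: "real \<Rightarrow> (nat \<Rightarrow> complex \<Rightarrow> complex) \<Rightarrow> bool" where
  "uu_minimal \<nu> f \<longleftrightarrow> (\<forall>\<omega>\<in>Sigma2. \<forall>x\<in>S1. dense_in_prod \<nu> (Wuu f \<omega> x))"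

definition rot_family :: "real \<Rightarrow> real \<Rightarrow> nat \<Rightarrow> complex \<Rightarrow> complex" where
  "rot_family a b k = (if k = 1 then circ_rot a else circ_rot b)"

end

theory Submission
  imports Defs
begin

lemma cis_minus_one_le: "cmod (cis d - 1) \<le> \<bar>d\<bar>"
proof -
  have "(cmod (cis d - 1))^2 = (cos d - 1)^2 + (sin d)^2"
    by (simp add: cmod_power2)
  also have "\<dots> = 4 * (sin (d/2))^2"
    using cos_double_sin[of "d/2"] sin_cos_squared_add[of d] by (simp add: power2_eq_square algebra_simps)
  also have "\<dots> \<le> 4 * (d/2)^2"
  proof -
    have "(sin (d/2))^2 \<le> (d/2)^2" by (metis abs_le_square_iff abs_sin_x_le_abs_x)
    then show ?thesis by simp
  qed
  also have "\<dots> = \<bar>d\<bar>^2" by (simp add: power2_eq_square)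
  finally show ?thesis using abs_le_square_iff by (metis abs_ge_zero abs_of_nonneg norm_ge_zero)
qed

lemma cis_dist_le: "cmod (cis a - cis b) \<le> \<bar>a - b\<bar>"
proof -
  have "cis a - cis b = cis b * (cis (a - b) - 1)"
    by (simp add: right_diff_distrib cis_mult)
  then have "cmod (cis a - cis b) = cmod (cis (a - b) - 1)" by (simp add: norm_mult)
  then show ?thesis using cis_minus_one_le by simp
qed

lemma rotpow: "(circ_rot t z)^n = cis (2*pi*real n*t) * z^n"
proof -
  have "cis (2*pi*t)^n = cis (2*pi*real n*t)" by (simp only: Complex.DeMoivre) (simp add: algebra_simps)
  then show ?thesis by (simp add: circ_rot_def power_mult_distrib)
qed

lemma funpow_semigrp: "f \<in> F \<Longrightarrow> (f ^^ Suc n) \<in> semigrp F"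
proof (induction n)
  case 0 then show ?case by (simp add: semigrp.gen)
next
  case (Suc n) then show ?case
    by (metis funpow_Suc_right funpow_swap1 o_apply semigrp.comp funpow.simps(2))
qed

lemma funpow_rot: "(circ_rot t ^^ n) x = cis (2*pi*real n*t) * x"
proof (induction n)
  case 0 then show ?case by simp
next
  case (Suc n)
  have "cis (2*pi*real (Suc n)*t) = cis (2*pi*t) * cis (2*pi*real n*t)"
    by (simp add: cis_mult algebra_simps)
  then show ?case using Suc by (simp add: circ_rot_def)
qed

lemma inv_rot:
  assumes "w \<in> S1"
  shows "inv_into S1 (circ_rot t) w = cis (-2*pi*t) * w"
proof (rule inv_into_f_eq)
  show "inj_on (circ_rot t) S1"
    by (rule inj_onI) (simp add: circ_rot_def)
  show "cis (-2*pi*t) * w \<in> S1" using assms by (simp add: S1_def norm_mult)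
  show "circ_rot t (cis (-2*pi*t) * w) = w"
    by (simp add: circ_rot_def cis_mult mult.assoc[symmetric])
qed

context
  fixes \<alpha> \<beta> :: real and Q :: nat and c :: complex
  assumes ha: "cis (2*pi*real Q*\<alpha>) = c" and hb: "cis (2*pi*real Q*\<beta>) = c"
begin

lemma rf_pow: "(rot_family \<alpha> \<beta> k z)^Q = c * z^Q"
  using ha hb by (simp add: rot_family_def rotpow mult.assoc)

lemma skew_iter: "(snd ((skew (rot_family \<alpha> \<beta>) ^^ n) p))^Q = c^n * (snd p)^Q"
proof (induction n)
  case 0 then show ?case by simp
next
  case (Suc n) then show ?case by (simp add: skew_def rf_pow)
qed

lemma skew_inv_step:
  assumes "snd p \<in> S1"
  shows "snd (skew_inv (rot_family \<alpha> \<beta>) p) \<in> S1 \<and> c * (snd (skew_inv (rot_family \<alpha> \<beta>) p))^Q = (snd p)^Q"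
proof -
  define t where "t = (if fst p (-1) = 1 then \<alpha> else \<beta>)"
  have rt: "rot_family \<alpha> \<beta> (fst p (-1)) = circ_rot t"
    by (simp add: rot_family_def t_def)
  have ct: "cis (2*pi*real Q*t) = c" using ha hb by (simp add: t_def)
  have e: "snd (skew_inv (rot_family \<alpha> \<beta>) p) = cis (-2*pi*t) * snd p"
    using assms by (simp add: skew_inv_def rt inv_rot)
  have "cis (-2*pi*t)^Q = cis (- (2*pi*real Q*t))" by (simp only: Complex.DeMoivre) (simp add: algebra_simps)
  then have "(cis (-2*pi*t) * snd p)^Q = cis (- (2*pi*real Q*t)) * (snd p)^Q"
    by (simp add: power_mult_distrib)
  moreover have "c * cis (- (2*pi*real Q*t)) = 1"
    using ct[symmetric] by (simp add: cis_mult)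
  ultimately show ?thesis using assms e
    by (simp add: S1_def norm_mult mult.assoc[symmetric])
qed

lemma skew_inv_iter:
  assumes "snd p \<in> S1"
  shows "snd ((skew_inv (rot_family \<alpha> \<beta>) ^^ n) p) \<in> S1 \<and> c^n * (snd ((skew_inv (rot_family \<alpha> \<beta>) ^^ n) p))^Q = (snd p)^Q"
proof (induction n)
  case 0 then show ?case using assms by simp
next
  case (Suc n)
  define r where "r = (skew_inv (rot_family \<alpha> \<beta>) ^^ n) p"
  have A: "snd r \<in> S1" "c^n * (snd r)^Q = (snd p)^Q" using Suc r_def by auto
  have B: "snd (skew_inv (rot_family \<alpha> \<beta>) r) \<in> S1"
     "c * (snd (skew_inv (rot_family \<alpha> \<beta>) r))^Q = (snd r)^Q"
    using skew_inv_step[OF A(1)] by auto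
  have "c^Suc n * (snd (skew_inv (rot_family \<alpha> \<beta>) r))^Q
      = c^n * (c * (snd (skew_inv (rot_family \<alpha> \<beta>) r))^Q)" by simp
  also have "\<dots> = (snd p)^Q" using A B by simp
  finally show ?case using B by (simp add: r_def)
qed

end


lemma part1:
  assumes "\<alpha> \<notin> \<rat>"
  shows "ifs_minimal {circ_rot \<alpha>, circ_rot \<beta>}"
  unfolding ifs_minimal_def
proof (intro ballI subsetI)
  fix x y assume x: "x \<in> S1" and y: "y \<in> S1"
  have nx: "norm x = 1" and ny: "norm y = 1" using x y by (auto simp: S1_def)
  define \<theta> where "\<theta> = Arg (y / x)"
  have "y / x \<noteq> 0" using nx ny by auto
  then have "cis \<theta> = y / x" using cis_Arg[of "y/x"] nx ny by (simp add: \<theta>_def sgn_div_norm norm_divide)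
  then have yx: "y = x * cis \<theta>" using nx by auto
  show "y \<in> closure {h x |h. h \<in> semigrp {circ_rot \<alpha>, circ_rot \<beta>}}"
    unfolding closure_approachable
  proof (intro allI impI)
    fix e :: real assume e: "e > 0"
    have e2: "e/(2*pi) > 0" using e by simp
    obtain h k :: int where k: "k > 0" and hk: "\<bar>of_int k * \<alpha> - of_int h - \<theta>/(2*pi)\<bar> < e/(2*pi)"
      using sequence_of_fractional_parts_is_dense[OF assms e2, of "\<theta>/(2*pi)"] by blast
    define n where "n = nat k - 1"
    have kn: "real (Suc n) = of_int k" using k by (simp add: n_def)
    have mem: "circ_rot \<alpha> ^^ Suc n \<in> semigrp {circ_rot \<alpha>, circ_rot \<beta>}"
      by (rule funpow_semigrp) simp
    have "cis (2*pi*(of_int k * \<alpha> - of_int h)) * cis (2*pi* of_int h) = cis (2*pi*(of_int k * \<alpha>))"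
      by (simp add: cis_mult algebra_simps)
    moreover have "cis (2*pi* of_int h) = 1" by (simp add: cis_multiple_2pi)
    moreover have "2*pi*real (Suc n)*\<alpha> = 2*pi*(of_int k * \<alpha>)" by (simp only: kn)
    ultimately have c1: "cis (2*pi*real (Suc n)*\<alpha>) = cis (2*pi*(of_int k * \<alpha> - of_int h))"
      by (metis mult.right_neutral)
    have "dist ((circ_rot \<alpha> ^^ Suc n) x) y = cmod (x * (cis (2*pi*(of_int k * \<alpha> - of_int h)) - cis \<theta>))"
      unfolding funpow_rot c1 yx dist_norm by (simp add: algebra_simps)
    also have "\<dots> = cmod (cis (2*pi*(of_int k * \<alpha> - of_int h)) - cis \<theta>)"
      by (simp add: norm_mult nx)
    also have "\<dots> \<le> \<bar>2*pi*(of_int k * \<alpha> - of_int h) - \<theta>\<bar>" by (rule cis_dist_le)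
    also have "\<dots> = 2*pi*\<bar>of_int k * \<alpha> - of_int h - \<theta>/(2*pi)\<bar>"
    proof -
      have "2*pi*(of_int k * \<alpha> - of_int h) - \<theta> = 2*pi*(of_int k * \<alpha> - of_int h - \<theta>/(2*pi))"
        by (simp add: algebra_simps)
      then show ?thesis by (simp add: abs_mult)
    qed
    also have "\<dots> < 2*pi*(e/(2*pi))" by (rule mult_strict_left_mono[OF hk]) simp
    also have "\<dots> = e" by simp
    finally show "\<exists>z\<in>{h x |h. h \<in> semigrp {circ_rot \<alpha>, circ_rot \<beta>}}. dist z y < e"
      using mem by blast
  qed
qed


lemma unit_root_norm:
  fixes z :: complex
  assumes "Q > 0" "norm (z^Q) = 1"
  shows "norm z = 1"
proof -
  have "norm z ^ Q = 1 ^ Q" using assms by (simp add: norm_power)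
  then show ?thesis using assms(1) by (metis norm_ge_zero power_eq_imp_eq_base zero_le_one)
qed

lemma sep_bound:
  fixes a b w :: complex
  assumes "Q > 0" "a^Q = w" "b^Q = - w" "norm w = 1"
  shows "2 / real Q \<le> dist b a"
proof -
  have na: "norm a = 1" using unit_root_norm[of Q a] assms by simp
  have nb: "norm b = 1" using unit_root_norm[of Q b] assms by simp
  have "norm (b^Q - a^Q) \<le> real Q * norm (b - a)"
    by (rule norm_power_diff) (use na nb in auto)
  moreover have "norm (b^Q - a^Q) = 2" using assms by (simp add: norm_minus_commute)
  ultimately have "2 \<le> real Q * dist b a" by (simp add: dist_norm)
  then show ?thesis using assms(1) by (simp add: field_simps)
qed

lemma part2:
  assumes Q: "Q > 0" and ha: "cis (2*pi*real Q*\<alpha>) = c" and hb: "cis (2*pi*real Q*\<beta>) = c"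
  shows "\<not> strict_attractor {circ_rot \<alpha>, circ_rot \<beta>}"
proof
  assume sa: "strict_attractor {circ_rot \<alpha>, circ_rot \<beta>}"
  define F where "F = {circ_rot \<alpha>, circ_rot \<beta>}"
  define A where "A n = (Fimg F ^^ n) {1}" for n
  have inv: "\<forall>z\<in>A n. z^Q = c^n" for n
  proof (induction n)
    case 0 then show ?case by (simp add: A_def)
  next
    case (Suc n)
    show ?case
    proof
      fix z assume "z \<in> A (Suc n)"
      then obtain f w where f: "f \<in> F" and w: "w \<in> A n" and z: "z = f w"
        by (auto simp: A_def Fimg_def)
      have "(f w)^Q = c * w^Q" using f ha hb by (auto simp: F_def rotpow)
      then show "z^Q = c^(Suc n)" using Suc w z by simp
    qed
  qed
  have ne: "A n \<noteq> {}" for n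
  proof (induction n)
    case 0 then show ?case by (simp add: A_def)
  next
    case (Suc n)
    then obtain w where "w \<in> A n" by auto
    then have "circ_rot \<alpha> w \<in> A (Suc n)" by (auto simp: A_def Fimg_def F_def)
    then show ?case by auto
  qed
  have cn: "norm c = 1" using hb by auto
  have bound: "2 / real Q \<le> hausdorff_dist (A n) S1" for n
  proof -
    obtain a0 where a0: "a0 \<in> A n" using ne by auto
    define b where "b = cis ((2*pi*real Q*\<beta>*real n + pi) / real Q)"
    have bS: "b \<in> S1" by (simp add: b_def S1_def)
    have "b^Q = cis (2*pi*real Q*\<beta>*real n + pi)"
      unfolding b_def Complex.DeMoivre using Q by simp
    also have "\<dots> = - cis (2*pi*real Q*\<beta>*real n)" by (simp add: minus_cis)
    also have "cis (2*pi*real Q*\<beta>*real n) = c^n"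
      unfolding hb[symmetric] Complex.DeMoivre by (simp add: mult_ac)
    finally have bQ: "b^Q = - (c^n)" .
    have "2 / real Q \<le> infdist b (A n)"
      unfolding infdist_def using ne[of n]
      apply simp
      apply (rule cINF_greatest, assumption)
      using sep_bound[OF Q _ bQ] inv[of n] cn by (simp add: norm_power)
    also have "\<dots> \<le> (SUP b\<in>S1. infdist b (A n))"
    proof (rule cSUP_upper[OF bS])
      show "bdd_above ((\<lambda>b. infdist b (A n)) ` S1)"
      proof (rule bdd_aboveI2)
        fix x assume "x \<in> S1"
        have "infdist x (A n) \<le> dist x a0" by (rule infdist_le[OF a0])
        also have "\<dots> \<le> norm x + norm a0" by (simp add: dist_norm norm_triangle_ineq4)
        finally show "infdist x (A n) \<le> 1 + norm a0" using \<open>x \<in> S1\<close> by (simp add: S1_def)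
      qed
    qed
    also have "\<dots> \<le> hausdorff_dist (A n) S1" by (simp add: hausdorff_dist_def)
    finally show ?thesis .
  qed
  have "(\<lambda>n. hausdorff_dist (A n) S1) \<longlonglongrightarrow> 0"
    using sa unfolding strict_attractor_def A_def F_def
    by (auto simp: S1_def)
  then have "2 / real Q \<le> 0"
    by (rule LIMSEQ_le_const) (use bound in auto)
  then show False using Q by simp
qed

lemma part3:
  assumes Q: "Q > 0" and ha: "cis (2*pi*real Q*\<alpha>) = c" and hb: "cis (2*pi*real Q*\<beta>) = c"
  shows "\<not> uu_minimal \<nu> (rot_family \<alpha> \<beta>)"
proof
  assume um: "uu_minimal \<nu> (rot_family \<alpha> \<beta>)"
  define \<omega>0 :: "int \<Rightarrow> nat" where "\<omega>0 = (\<lambda>_. 1)"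
  have \<omega>S: "\<omega>0 \<in> Sigma2" by (simp add: \<omega>0_def Sigma2_def)
  have oneS: "(1::complex) \<in> S1" by (simp add: S1_def)
  have root: "y'^Q = 1" if "(\<eta>', y') \<in> Wuu (rot_family \<alpha> \<beta>) \<omega>0 1" for \<eta>' y'
  proof -
    from that obtain n \<omega>' where
      p: "(\<eta>', y') = (skew (rot_family \<alpha> \<beta>) ^^ n) (\<omega>', snd ((skew_inv (rot_family \<alpha> \<beta>) ^^ n) (\<omega>0, 1)))"
      unfolding Wuu_def by auto
    have "y'^Q = c^n * (snd ((skew_inv (rot_family \<alpha> \<beta>) ^^ n) (\<omega>0, 1)))^Q"
      using skew_iter[OF ha hb, of n "(\<omega>', snd ((skew_inv (rot_family \<alpha> \<beta>) ^^ n) (\<omega>0, 1)))"] p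
      by (metis snd_conv)
    also have "\<dots> = 1"
      using skew_inv_iter[OF ha hb, of "(\<omega>0, 1)" n] oneS by simp
    finally show ?thesis .
  qed
  define y0 where "y0 = cis (pi / real Q)"
  have y0S: "y0 \<in> S1" by (simp add: y0_def S1_def)
  have y0Q: "y0^Q = - 1" unfolding y0_def Complex.DeMoivre using Q by simp
  have "dense_in_prod \<nu> (Wuu (rot_family \<alpha> \<beta>) \<omega>0 1)"
    using um \<omega>S oneS unfolding uu_minimal_def by blast
  moreover have "2 / real Q > 0" using Q by simp
  ultimately obtain \<eta>' y' where m: "(\<eta>', y') \<in> Wuu (rot_family \<alpha> \<beta>) \<omega>0 1"
      and d: "dist y0 y' < 2 / real Q"
    unfolding dense_in_prod_def using \<omega>S y0S by blast
  have "2 / real Q \<le> dist y0 y'"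
    using sep_bound[OF Q root[OF m] y0Q] by simp
  then show False using d by simp
qed

theorem mainTheorem19:
  fixes \<alpha> \<beta> \<nu> :: real
  assumes "\<alpha> \<notin> \<rat>" and "\<beta> \<notin> \<rat>" and "\<beta> - \<alpha> \<in> \<rat>"
    and "0 < \<nu>" and "\<nu> < 1"
  shows "ifs_minimal {circ_rot \<alpha>, circ_rot \<beta>}
    \<and> \<not> strict_attractor {circ_rot \<alpha>, circ_rot \<beta>}
    \<and> \<not> uu_minimal \<nu> (rot_family \<alpha> \<beta>)"
proof -
  obtain a b :: int where b: "0 < b" and ab: "\<beta> - \<alpha> = of_int a / of_int b"
    using Rats_cases'[OF assms(3)] by metis
  define Q where "Q = nat b"
  have Q: "Q > 0" and Qb: "real Q = of_int b" using b by (auto simp: Q_def)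
  define c where "c = cis (2*pi*real Q*\<beta>)"
  have hb: "cis (2*pi*real Q*\<beta>) = c" by (simp add: c_def)
  have h: "real Q * \<beta> - real Q * \<alpha> = of_int a" using ab b Qb by (simp add: field_simps)
  have e: "2*pi*real Q*\<alpha> = 2*pi*real Q*\<beta> - 2*pi* of_int a"
    using arg_cong[OF h, of "\<lambda>x. 2*pi*x"] by (simp add: algebra_simps)
  have ha: "cis (2*pi*real Q*\<alpha>) = c"
    unfolding e c_def cis_divide[symmetric] by (simp add: cis_multiple_2pi)
  show ?thesis
    using part1[OF assms(1)] part2[OF Q ha hb] part3[OF Q ha hb] by blast
qed

end
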